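(* Let $\theta\in\Omega(W)$ be the linear form $y=(y_0,y_1,\dots)\mapsto\alpha_0(0)$, where $y_0=\alpha_0e+\beta_0X^rf$ with $\alpha_0,\beta_0\in k[\![X]\!]$. Then for every $\begin{pmatrix}a&b\\0&d\end{pmatrix}\in\mathrm B\cap\mathrm K\mathrm Z$, $$\begin{pmatrix}a&b\\0&d\end{pmatrix}\star\theta=\chi(ad)\,\omega^r(a)\,\theta.$$
   Context: $p$ prime, $k$ finite extension of $\mathbf F_p$, $r\in\{0,\dots,p-1\}$, $\chi=\omega^s\mu_\lambda$ ($\lambda\in k^\times$), viewed also as characters of $\mathbf Q_p^\times$ by $\omega(a)=ap^{-\mathrm{val}(a)}\bmod p$, $\mu_\lambda(a)=\lambda^{\mathrm{val}(a)}$. $W=\rho(r,\chi)=\mathrm{ind}(\omega_2^{r+1})\otimes\chi$ (irreducible 2-dimensional, determinant of $\mathrm{ind}(\omega_2^{r+1})$ equal to $\omega^{r+1}$, restriction to inertia $\omega_2^{r+1}\oplus\omega_2^{p(r+1)}$). $\mathrm D(W)$ is its étale $(\phi,\Gamma)$-module over $k(\!(X)\!)$ with basis $e,f$ such that $\phi(e)=\lambda f$, $\phi(f)=-\lambda X^{-(r+1)(p-1)}e$, $\gamma(e)=\omega(\gamma)^sf_\gamma^{(r+1)/(p+1)}e$, $\gamma(f)=\omega(\gamma)^sf_\gamma^{p(r+1)/(p+1)}f$ with $f_\gamma(X)=\omega(\gamma)X/\gamma(X)$, $\gamma(X)=(1+X)^{\chi_{\mathrm{cycl}}(\gamma)}-1$;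 $\psi$ is the left inverse of $\phi$ with $\psi(a\phi(d))=\psi(a)d$ (on $k(\!(X)\!)$: $\psi(\sum_{i=0}^{p-1}(1+X)^i\phi(a_i))=a_0$). One has $\mathrm D^\sharp(W)=k[\![X]\!]e\oplus X^rk[\![X]\!]f$. $\varprojlim_\psi\mathrm D^\sharp(W)$ is the set of $(v_0,v_1,\dots)$, $v_i\in\mathrm D^\sharp(W)$, $\psi(v_{i+1})=v_i$, with the action of $\mathrm B=\mathrm B_2(\mathbf Q_p)$: $(\mathrm{diag}(x,x)\star v)_i=(\omega^r\chi^2)^{-1}(x)v_i$; $(\mathrm{diag}(1,p^j)\star v)_i=v_{i-j}$ (meaning $\psi^{j-i}(v_0)$ if $i<j$); $(\mathrm{diag}(1,a)\star v)_i=\gamma_a^{-1}(v_i)$ for $a\in\mathbf Z_p^\times$, $\chi_{\mathrm{cycl}}(\gamma_a)=a$; $(\begin{pmatrix}1&z\\0&1\end{pmatrix}\star v)_i=\psi^j((1+X)^{p^{i+j}z}v_{i+j})$ for $i+j\ge-\mathrm{val}(z)$. $\Omega(W)$ is its continuous $k$-dual, with $(g\star\theta)(y)=\theta(g^{-1}\star y)$. $\mathrm K=\mathrm{GL}_2(\mathbf Z_p)$, $\mathrm Z$ the centre of $\mathrm{GL}_2(\mathbf Q_p)$. *)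

theory Defs
  imports "HOL-Computational_Algebra.Formal_Laurent_Series"
begin

section \<open>p-adic integers, as compatible sequences of residues x n \<in> [0, p^n)\<close>

definition Zp :: "nat \<Rightarrow> (nat \<Rightarrow> int) set" where
  "Zp p = {x. \<forall>n. 0 \<le> x n \<and> x n < int p ^ n \<and> x n = x (Suc n) mod int p ^ n}"

definition zp_unit :: "nat \<Rightarrow> (nat \<Rightarrow> int) \<Rightarrow> bool" where
  "zp_unit p x \<longleftrightarrow> x \<in> Zp p \<and> x 1 \<noteq> 0"

definition zp_zero :: "nat \<Rightarrow> int" where "zp_zero = (\<lambda>n. 0)"
definition zp_one :: "nat \<Rightarrow> nat \<Rightarrow> int" where "zp_one p = (\<lambda>n. 1 mod int p ^ n)"
definition zp_of_int :: "nat \<Rightarrow> int \<Rightarrow> nat \<Rightarrow> int" where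
  "zp_of_int p a = (\<lambda>n. a mod int p ^ n)"
definition zp_mult :: "nat \<Rightarrow> (nat \<Rightarrow> int) \<Rightarrow> (nat \<Rightarrow> int) \<Rightarrow> nat \<Rightarrow> int" where
  "zp_mult p x y = (\<lambda>n. (x n * y n) mod int p ^ n)"
definition zp_neg :: "nat \<Rightarrow> (nat \<Rightarrow> int) \<Rightarrow> nat \<Rightarrow> int" where
  "zp_neg p x = (\<lambda>n. (- x n) mod int p ^ n)"
definition zp_sub :: "nat \<Rightarrow> (nat \<Rightarrow> int) \<Rightarrow> (nat \<Rightarrow> int) \<Rightarrow> nat \<Rightarrow> int" where
  "zp_sub p x y = (\<lambda>n. (x n - y n) mod int p ^ n)"
definition zp_pmul :: "nat \<Rightarrow> nat \<Rightarrow> (nat \<Rightarrow> int) \<Rightarrow> nat \<Rightarrow> int" where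
  "zp_pmul p m x = (\<lambda>n. (int p ^ m * x n) mod int p ^ n)"
definition zp_inv :: "nat \<Rightarrow> (nat \<Rightarrow> int) \<Rightarrow> nat \<Rightarrow> int" where
  "zp_inv p u = (THE w. w \<in> Zp p \<and> zp_mult p u w = zp_one p)"
text \<open>the p-adic integer a/b (b prime to p)\<close>
definition zp_frac :: "nat \<Rightarrow> int \<Rightarrow> int \<Rightarrow> nat \<Rightarrow> int" where
  "zp_frac p a b = (THE w. w \<in> Zp p \<and> zp_mult p (zp_of_int p b) w = zp_of_int p a)"

section \<open>Q_p: None is 0, Some (v,u) with u a p-adic unit is p^v u\<close>

type_synonym qp = "(int \<times> (nat \<Rightarrow> int)) option"

definition qp_wf :: "nat \<Rightarrow> qp \<Rightarrow> bool" where
  "qp_wf p x = (case x of None \<Rightarrow> True | Some (v, u) \<Rightarrow> zp_unit p u)"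
definition qp_units :: "nat \<Rightarrow> qp set" where
  "qp_units p = {x. x \<noteq> None \<and> qp_wf p x}"
definition qp_mult :: "nat \<Rightarrow> qp \<Rightarrow> qp \<Rightarrow> qp" where
  "qp_mult p x y = (case (x, y) of (Some (v, u), Some (w, t)) \<Rightarrow> Some (v + w, zp_mult p u t)
                     | _ \<Rightarrow> None)"
definition qp_inv :: "nat \<Rightarrow> qp \<Rightarrow> qp" where
  "qp_inv p x = map_option (\<lambda>(v, u). (- v, zp_inv p u)) x"
definition qp_neg :: "nat \<Rightarrow> qp \<Rightarrow> qp" where
  "qp_neg p x = map_option (\<lambda>(v, u). (v, zp_neg p u)) x"
definition qp_of_zp :: "nat \<Rightarrow> (nat \<Rightarrow> int) \<Rightarrow> qp" where
  "qp_of_zp p x = (if x = zp_zero then None else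
     (let m = (LEAST n. x (Suc n) \<noteq> 0) in Some (int m, \<lambda>n. x (n + m) div int p ^ m)))"

section \<open>The Borel subgroup B (upper triangular (a b; 0 d)) and B \<inter> KZ\<close>

definition Bor :: "nat \<Rightarrow> (qp \<times> qp \<times> qp) set" where
  "Bor p = {(a, b, d). a \<in> qp_units p \<and> d \<in> qp_units p \<and> qp_wf p b}"

definition GL2Zp :: "nat \<Rightarrow> ((nat \<Rightarrow> int) \<times> (nat \<Rightarrow> int) \<times> (nat \<Rightarrow> int) \<times> (nat \<Rightarrow> int)) set" where
  "GL2Zp p = {(k11, k12, k21, k22). k11 \<in> Zp p \<and> k12 \<in> Zp p \<and> k21 \<in> Zp p \<and> k22 \<in> Zp p \<and>
      zp_unit p (zp_sub p (zp_mult p k11 k22) (zp_mult p k12 k21))}"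

definition BKZ :: "nat \<Rightarrow> (qp \<times> qp \<times> qp) set" where
  "BKZ p = {(a, b, d). (a, b, d) \<in> Bor p \<and>
     (\<exists>z k11 k12 k21 k22. z \<in> qp_units p \<and> (k11, k12, k21, k22) \<in> GL2Zp p \<and>
        a = qp_mult p z (qp_of_zp p k11) \<and> b = qp_mult p z (qp_of_zp p k12) \<and>
        None = qp_mult p z (qp_of_zp p k21) \<and> d = qp_mult p z (qp_of_zp p k22))}"

definition B_inv :: "nat \<Rightarrow> qp \<times> qp \<times> qp \<Rightarrow> qp \<times> qp \<times> qp" where
  "B_inv p g = (case g of (a, b, d) \<Rightarrow>
     (qp_inv p a, qp_neg p (qp_mult p b (qp_mult p (qp_inv p a) (qp_inv p d))), qp_inv p d))"

text \<open>omega(x) = x p^(-val x) mod p\<close>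
definition omega :: "nat \<Rightarrow> qp \<Rightarrow> 'k::field" where
  "omega p x = (case x of None \<Rightarrow> 0 | Some (v, u) \<Rightarrow> of_int (u 1))"
definition chi :: "nat \<Rightarrow> int \<Rightarrow> 'k::field \<Rightarrow> qp \<Rightarrow> 'k" where
  "chi p s lam x = (case x of None \<Rightarrow> 0 | Some (v, u) \<Rightarrow> omega p x powi s * lam powi v)"

text \<open>(1+X)^c for c \<in> Z_p: coefficient n is that of (1+X)^(c mod p^(n+1))\<close>
definition fps_binom_zp :: "(nat \<Rightarrow> int) \<Rightarrow> 'k::field fps" where
  "fps_binom_zp c = Abs_fps (\<lambda>n. ((1 + fps_X) ^ nat (c (Suc n))) $ n)"

text \<open>F^c for a power series F with constant term 1: (1 + (F-1))^c\<close>
definition fps_pow_zp :: "'k::field fps \<Rightarrow> (nat \<Rightarrow> int) \<Rightarrow> 'k fps" where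
  "fps_pow_zp F c = fps_compose (fps_binom_zp c) (F - 1)"

definition gX :: "(nat \<Rightarrow> int) \<Rightarrow> 'k::field fps" where
  "gX a = fps_binom_zp a - 1"

definition gamma_fls :: "(nat \<Rightarrow> int) \<Rightarrow> 'k::field fls \<Rightarrow> 'k fls" where
  "gamma_fls a F = fls_compose_fps F (gX a)"

definition phi_fls :: "nat \<Rightarrow> 'k::field fls \<Rightarrow> 'k fls" where
  "phi_fls p F = fls_compose_fps F ((1 + fps_X) ^ p - 1)"

definition psi_fls :: "nat \<Rightarrow> 'k::field fls \<Rightarrow> 'k fls" where
  "psi_fls p F = (THE a0. \<exists>a. F = (\<Sum>i<p. fps_to_fls ((1 + fps_X) ^ i) * phi_fls p (a i)) \<and> a 0 = a0)"

section \<open>D(W): an element (u, v) stands for u e + v f\<close>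

type_synonym 'k dmod = "'k fls \<times> 'k fls"

definition smulD :: "'k::field fls \<Rightarrow> 'k dmod \<Rightarrow> 'k dmod" where
  "smulD c y = (c * fst y, c * snd y)"

definition phi_e :: "'k::field \<Rightarrow> 'k dmod" where
  "phi_e lam = (0, fls_const lam)"
definition phi_f :: "nat \<Rightarrow> nat \<Rightarrow> 'k::field \<Rightarrow> 'k dmod" where
  "phi_f p r lam = (- fls_const lam * fls_X_intpow (- (int (r + 1) * (int p - 1))), 0)"

text \<open>psi(c1 phi(e) + c2 phi(f)) = psi(c1) e + psi(c2) f; coordinates by Cramer's rule\<close>
definition psiD :: "nat \<Rightarrow> nat \<Rightarrow> 'k::field \<Rightarrow> 'k dmod \<Rightarrow> 'k dmod" where
  "psiD p r lam y = (let (b11, b12) = phi_e lam; (b21, b22) = phi_f p r lam;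
       dt = b11 * b22 - b12 * b21;
       c1 = (fst y * b22 - snd y * b21) / dt;
       c2 = (b11 * snd y - b12 * fst y) / dt
     in (psi_fls p c1, psi_fls p c2))"

definition f_gamma :: "(nat \<Rightarrow> int) \<Rightarrow> 'k::field fps" where
  "f_gamma a = fls_regpart (fls_const (of_int (a 1)) * fls_X / fps_to_fls (gX a))"

definition gammaD :: "nat \<Rightarrow> nat \<Rightarrow> int \<Rightarrow> (nat \<Rightarrow> int) \<Rightarrow> 'k::field dmod \<Rightarrow> 'k dmod" where
  "gammaD p r s a y =
     (gamma_fls a (fst y) * fls_const (of_int (a 1) powi s) *
        fps_to_fls (fps_pow_zp (f_gamma a) (zp_frac p (int (r + 1)) (int p + 1))),
      gamma_fls a (snd y) * fls_const (of_int (a 1) powi s) *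
        fps_to_fls (fps_pow_zp (f_gamma a) (zp_frac p (int p * int (r + 1)) (int p + 1))))"

definition Dsharp :: "nat \<Rightarrow> 'k::field dmod set" where
  "Dsharp r = {(fps_to_fls al, fls_X_intpow (int r) * fps_to_fls be) | al be. True}"

definition plim :: "nat \<Rightarrow> nat \<Rightarrow> 'k::field \<Rightarrow> (nat \<Rightarrow> 'k dmod) set" where
  "plim p r lam = {v. \<forall>i. v i \<in> Dsharp r \<and> psiD p r lam (v (Suc i)) = v i}"

definition act_scal :: "nat \<Rightarrow> nat \<Rightarrow> int \<Rightarrow> 'k::field \<Rightarrow> qp \<Rightarrow> (nat \<Rightarrow> 'k dmod) \<Rightarrow> nat \<Rightarrow> 'k dmod" where
  "act_scal p r s lam x v = (\<lambda>i. smulD (fls_const (inverse (omega p x ^ r * chi p s lam x ^ 2))) (v i))"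

definition act_shift :: "nat \<Rightarrow> nat \<Rightarrow> 'k::field \<Rightarrow> int \<Rightarrow> (nat \<Rightarrow> 'k dmod) \<Rightarrow> nat \<Rightarrow> 'k dmod" where
  "act_shift p r lam j v = (\<lambda>i. if j \<le> int i then v (nat (int i - j))
                                 else (psiD p r lam ^^ nat (j - int i)) (v 0))"

definition act_gam :: "nat \<Rightarrow> nat \<Rightarrow> int \<Rightarrow> (nat \<Rightarrow> int) \<Rightarrow> (nat \<Rightarrow> 'k::field dmod) \<Rightarrow> nat \<Rightarrow> 'k dmod" where
  "act_gam p r s a v = (\<lambda>i. gammaD p r s (zp_inv p a) (v i))"

definition act_unip :: "nat \<Rightarrow> nat \<Rightarrow> 'k::field \<Rightarrow> qp \<Rightarrow> (nat \<Rightarrow> 'k dmod) \<Rightarrow> nat \<Rightarrow> 'k dmod" where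
  "act_unip p r lam z v = (\<lambda>i. case z of None \<Rightarrow> v i
     | Some (w, u) \<Rightarrow> (let j = nat (- w - int i) in
         (psiD p r lam ^^ j) (smulD (fps_to_fls (fps_binom_zp (zp_pmul p (nat (int i + int j + w)) u)))
                                     (v (i + j)))))"

text \<open>(a b; 0 d) = (1 b/d; 0 1) diag(a,a) diag(1,p^j) diag(1,u), where d/a = p^j u\<close>
definition act_B :: "nat \<Rightarrow> nat \<Rightarrow> int \<Rightarrow> 'k::field \<Rightarrow> qp \<times> qp \<times> qp \<Rightarrow> (nat \<Rightarrow> 'k dmod) \<Rightarrow> nat \<Rightarrow> 'k dmod" where
  "act_B p r s lam g v = (case g of (a, b, d) \<Rightarrow>
     (case qp_mult p d (qp_inv p a) of None \<Rightarrow> v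
      | Some (j, u) \<Rightarrow>
         act_unip p r lam (qp_mult p b (qp_inv p d))
           (act_scal p r s lam a (act_shift p r lam j (act_gam p r s u v)))))"

definition theta :: "(nat \<Rightarrow> 'k::field dmod) \<Rightarrow> 'k" where
  "theta y = fls_nth (fst (y 0)) 0"

end

theory Submission imports Defs "HOL-Number_Theory.Cong"
begin

lemma of_int_mod_char:
  assumes "CHAR('k::field) = p"
  shows "(of_int (x mod int p) :: 'k) = of_int x"
proof -
  have "x = x mod int p + int p * (x div int p)" by simp
  hence "(of_int x :: 'k) = of_int (x mod int p) + of_int (int p) * of_int (x div int p)"
    by (metis of_int_add of_int_mult)
  moreover have "(of_int (int p) :: 'k) = 0" using assms of_nat_CHAR[where 'a='k] by simp
  ultimately show ?thesis by simp
qed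

lemma Zp_range:
  assumes "x \<in> Zp p"
  shows "0 \<le> x n \<and> x n < int p ^ n"
  using assms unfolding Zp_def by blast

lemma Zp_range1:
  assumes "x \<in> Zp p"
  shows "0 \<le> x 1" "x 1 < int p"
  using Zp_range[OF assms, of 1] by simp_all

lemma Zp_mod1:
  assumes "prime p" "x \<in> Zp p" "n \<ge> 1"
  shows "x n mod int p = x 1"
  using assms(3)
proof (induction n rule: dec_induct)
  case base
  have "0 \<le> x 1" "x 1 < int p" using Zp_range1[OF assms(2)] by simp_all
  then show ?case by simp
next
  case (step n)
  have "x n = x (Suc n) mod int p ^ n" using assms(2) unfolding Zp_def by blast
  moreover have "int p dvd int p ^ n" using step(1) by (simp add: dvd_power)
  ultimately have "x n mod int p = x (Suc n) mod int p" by (simp add: mod_mod_cancel)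
  then show ?case using step by simp
qed

lemma Zp_coprime:
  assumes "prime p" "x \<in> Zp p" "x 1 \<noteq> 0"
  shows "coprime (x n) (int p ^ n)"
proof (cases "n = 0")
  case True then show ?thesis by simp
next
  case False
  have "x n mod int p = x 1" using Zp_mod1[OF assms(1,2)] False by simp
  hence "\<not> int p dvd x n" using assms(3) by (metis dvd_eq_mod_eq_0)
  moreover have "prime (int p)" using assms(1) by simp
  ultimately have "coprime (int p) (x n)" by (simp add: prime_imp_coprime)
  then show ?thesis by (simp add: coprime_commute)
qed

lemma inv_unique:
  fixes c m t t' :: int
  assumes "coprime c m" "0 \<le> t" "t < m" "0 \<le> t'" "t' < m" "[c*t = 1] (mod m)" "[c*t' = 1] (mod m)"
  shows "t = t'"
proof -
  have "[c*t = c*t'] (mod m)" using assms(6,7) by (meson cong_sym cong_trans)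
  hence "[t = t'] (mod m)" using assms(1) cong_mult_lcancel by blast
  thus ?thesis using assms cong_less_imp_eq_int by blast
qed

lemma zp_inv_prop:
  assumes "prime p" "x \<in> Zp p" "x 1 \<noteq> 0"
  shows "zp_inv p x \<in> Zp p \<and> zp_mult p x (zp_inv p x) = zp_one p"
proof -
  have pp: "int p > 1" using assms(1) prime_gt_1_nat by simp
  define P where "P = (\<lambda>n t. 0 \<le> t \<and> t < int p ^ n \<and> [x n * t = 1] (mod int p ^ n))"
  have ex: "\<exists>t. P n t" for n
  proof -
    obtain t where "[x n * t = 1] (mod int p ^ n)"
      using cong_solve_coprime_int[OF Zp_coprime[OF assms]] by blast
    hence "[x n * (t mod int p ^ n) = 1] (mod int p ^ n)"
      by (metis cong_def mod_mult_right_eq)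
    moreover have "0 \<le> t mod int p ^ n" "t mod int p ^ n < int p ^ n" using pp by auto
    ultimately show ?thesis unfolding P_def by blast
  qed
  have un: "P n t \<Longrightarrow> P n t' \<Longrightarrow> t = t'" for n t t'
    unfolding P_def using inv_unique[OF Zp_coprime[OF assms]] by blast
  define w where "w = (\<lambda>n. SOME t. P n t)"
  have Pw: "P n (w n)" for n unfolding w_def using ex someI_ex by metis
  have xc: "x n = x (Suc n) mod int p ^ n" for n using assms(2) unfolding Zp_def by blast
  have wZ: "w \<in> Zp p"
    unfolding Zp_def
  proof (safe)
    fix n
    show "0 \<le> w n" "w n < int p ^ n" using Pw[of n] unfolding P_def by auto
    have "P n (w (Suc n) mod int p ^ n)"
    proof -
      have "[x (Suc n) * w (Suc n) = 1] (mod int p ^ Suc n)" using Pw[of "Suc n"] unfolding P_def by auto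
      hence "[x (Suc n) * w (Suc n) = 1] (mod int p ^ n)"
        by (rule cong_dvd_modulus) (simp add: power_Suc)
      hence "[x n * (w (Suc n) mod int p ^ n) = 1] (mod int p ^ n)"
        by (simp add: cong_def xc[of n] mod_mult_left_eq mod_mult_right_eq)
      thus ?thesis unfolding P_def using pp by auto
    qed
    thus "w n = w (Suc n) mod int p ^ n" using un Pw by blast
  qed
  have wm: "zp_mult p x w = zp_one p"
    unfolding zp_mult_def zp_one_def
    using Pw unfolding P_def cong_def by auto
  have "\<exists>!w. w \<in> Zp p \<and> zp_mult p x w = zp_one p"
  proof (rule ex1I[of _ w])
    show "w \<in> Zp p \<and> zp_mult p x w = zp_one p" using wZ wm by blast
  next
    fix v assume v: "v \<in> Zp p \<and> zp_mult p x v = zp_one p"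
    show "v = w"
    proof
      fix n
      have "(x n * v n) mod int p ^ n = 1 mod int p ^ n"
        using fun_cong[OF conjunct2[OF v], of n] unfolding zp_mult_def zp_one_def by simp
      hence "P n (v n)" using Zp_range[OF conjunct1[OF v], of n] unfolding P_def cong_def by simp
      thus "v n = w n" using un Pw by blast
    qed
  qed
  thus ?thesis unfolding zp_inv_def by (rule theI')
qed

lemma binom0: "(fps_binom_zp c :: 'k::field fps) $ 0 = 1"
  unfolding fps_binom_zp_def by (simp add: fps_power_zeroth)

lemma gX0: "(gX a :: 'k::field fps) $ 0 = 0"
  unfolding gX_def by (simp add: binom0)

lemma powzp0: "(fps_pow_zp F c :: 'k::field fps) $ 0 = 1"
  unfolding fps_pow_zp_def by (simp add: binom0)

lemma gamma_ps: "\<exists>H. gamma_fls a (fps_to_fls F) = fps_to_fls H \<and> H $ 0 = (F $ 0 :: 'k::field)"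
proof (cases "gX a = (0::'k fps)")
  case True
  show ?thesis unfolding gamma_fls_def True fls_compose_fps_0_right
    by (intro exI[of _ "fps_const (F $ 0)"]) (simp add: fls_subdegree_fls_to_fps_gt0)
next
  case False
  show ?thesis unfolding gamma_fls_def using False gX0[of a]
    by (intro exI[of _ "fps_compose F (gX a)"]) (simp add: fls_compose_fps_to_fls[OF False gX0])
qed

lemma main_comp:
  fixes lam :: "'k::field"
  assumes y: "y \<in> plim p r lam"
    and du: "qp_mult p d (qp_inv p a) = Some (0, u)"
    and bz: "qp_mult p b (qp_inv p d) = None \<or> (\<exists>w t. qp_mult p b (qp_inv p d) = Some (w, t) \<and> w \<ge> 0)"
  shows "theta (act_B p r s lam (a, b, d) y)
     = inverse (omega p a ^ r * chi p s lam a ^ 2) * (of_int (zp_inv p u 1) powi s) * theta y"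
proof -
  obtain al be where y0: "y 0 = (fps_to_fls al, fls_X_intpow (int r) * fps_to_fls be)"
    using y unfolding plim_def Dsharp_def by blast
  obtain H where H: "gamma_fls (zp_inv p u) (fps_to_fls al) = fps_to_fls H" "H $ 0 = al $ 0"
    using gamma_ps by blast
  define c1 :: 'k where "c1 = of_int (zp_inv p u 1) powi s"
  define c2 :: 'k where "c2 = inverse (omega p a ^ r * chi p s lam a ^ 2)"
  define P :: "'k fps" where "P = fps_pow_zp (f_gamma (zp_inv p u)) (zp_frac p (int (r + 1)) (int p + 1))"
  define V where "V = act_scal p r s lam a (act_shift p r lam 0 (act_gam p r s u y))"
  have sh: "act_shift p r lam 0 v = v" for v :: "nat \<Rightarrow> 'k dmod"
    unfolding act_shift_def by auto
  have V0: "fst (V 0) = fps_to_fls (fps_const c2 * (H * fps_const c1 * P))"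
    unfolding V_def sh act_scal_def act_gam_def gammaD_def smulD_def y0
    by (simp add: H c1_def c2_def P_def fls_times_fps_to_fls)
  have P0: "P $ 0 = 1" unfolding P_def by (rule powzp0)
  have fV: "fls_nth (fst (act_unip p r lam (qp_mult p b (qp_inv p d)) V 0)) 0 = fls_nth (fst (V 0)) 0"
    using bz
  proof
    assume "qp_mult p b (qp_inv p d) = None" thus ?thesis unfolding act_unip_def by simp
  next
    assume "\<exists>w t. qp_mult p b (qp_inv p d) = Some (w, t) \<and> w \<ge> 0"
    then obtain w t where wt: "qp_mult p b (qp_inv p d) = Some (w, t)" "w \<ge> 0" by blast
    show ?thesis unfolding act_unip_def wt using wt(2)
      by (simp add: smulD_def V0 binom0 fls_times_fps_to_fls[symmetric] del: fps_to_fls_nth)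
         (simp add: binom0)
  qed
  have "theta (act_B p r s lam (a, b, d) y) = fls_nth (fst (V 0)) 0"
    unfolding theta_def act_B_def using fV by (simp add: du V_def)
  also have "\<dots> = c2 * c1 * al $ 0" unfolding V0 using H P0 by simp
  finally show ?thesis unfolding theta_def y0 c1_def c2_def by simp
qed

lemma fid:
  fixes A D lam :: "'k::field"
  assumes "A \<noteq> 0" "D \<noteq> 0" "lam \<noteq> 0"
  shows "inverse (inverse A ^ r * (inverse A powi s * lam powi (- v)) ^ 2) * (inverse (inverse D * A) powi s)
     = (A * D) powi s * lam powi (v + v) * A ^ r"
proof -
  define X where "X = A powi s"
  define Y where "Y = D powi s"
  define L where "L = lam powi v"
  have nz: "X \<noteq> 0" "Y \<noteq> 0" "L \<noteq> 0" using assms unfolding X_def Y_def L_def by auto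
  have 1: "inverse (inverse D * A) powi s = Y * inverse X"
  proof -
    have "inverse (inverse D * A) = D * inverse A" using assms by (simp add: field_simps)
    thus ?thesis unfolding X_def Y_def by (simp add: power_int_mult_distrib power_int_inverse)
  qed
  have 2: "inverse A powi s = inverse X" unfolding X_def by (simp add: power_int_inverse)
  have 3: "lam powi (- v) = inverse L" unfolding L_def by (simp add: power_int_minus)
  have 4: "(A * D) powi s = X * Y" unfolding X_def Y_def by (simp add: power_int_mult_distrib)
  have 5: "lam powi (v + v) = L * L" unfolding L_def using power_int_add[of lam v v] assms by simp
  show ?thesis unfolding 1 2 3 4 5 using nz assms
    by (simp add: field_simps power2_eq_square)
qed

lemma zp_mult_Zp:
  assumes "prime p" "u \<in> Zp p" "t \<in> Zp p"
  shows "zp_mult p u t \<in> Zp p"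
proof -
  have pp: "int p > 0" using assms(1) prime_gt_0_nat by simp
  have cu: "u n = u (Suc n) mod int p ^ n" "t n = t (Suc n) mod int p ^ n" for n
    using assms(2,3) unfolding Zp_def by blast+
  have dv: "int p ^ n dvd int p ^ Suc n" for n by (simp add: power_Suc)
  show ?thesis unfolding Zp_def zp_mult_def
  proof (safe)
    fix n
    show "0 \<le> u n * t n mod int p ^ n" "u n * t n mod int p ^ n < int p ^ n" using pp by auto
    show "u n * t n mod int p ^ n = u (Suc n) * t (Suc n) mod int p ^ Suc n mod int p ^ n"
      unfolding mod_mod_cancel[OF dv] cu[of n] by (simp add: mod_mult_eq)
  qed
qed

lemma zp_unit_mult:
  assumes "prime p" "zp_unit p u" "zp_unit p t"
  shows "zp_unit p (zp_mult p u t) \<and> zp_mult p u t 1 = (u 1 * t 1) mod int p"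
proof -
  have "0 \<le> u 1" "u 1 < int p" "0 \<le> t 1" "t 1 < int p" "u 1 \<noteq> 0" "t 1 \<noteq> 0"
    using assms(2,3) Zp_range1 unfolding zp_unit_def by auto
  hence nd: "\<not> int p dvd u 1" "\<not> int p dvd t 1" by (auto dest: zdvd_imp_le)
  have "prime (int p)" using assms(1) by simp
  hence "\<not> int p dvd u 1 * t 1" using nd prime_dvd_mult_iff by blast
  hence "(u 1 * t 1) mod int p \<noteq> 0" by (simp add: dvd_eq_mod_eq_0)
  thus ?thesis using zp_mult_Zp[OF assms(1)] assms(2,3) unfolding zp_unit_def
    by (simp add: zp_mult_def)
qed

lemma zp_inv_unit:
  assumes "prime p" "zp_unit p u"
  shows "zp_unit p (zp_inv p u) \<and> (u 1 * zp_inv p u 1) mod int p = 1"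
proof -
  have pr: "zp_inv p u \<in> Zp p \<and> zp_mult p u (zp_inv p u) = zp_one p"
    using zp_inv_prop[OF assms(1)] assms(2) unfolding zp_unit_def by blast
  have pp: "int p > 1" using assms(1) prime_gt_1_nat by simp
  have "(u 1 * zp_inv p u 1) mod int p = 1"
    using fun_cong[OF conjunct2[OF pr], of 1] pp unfolding zp_mult_def zp_one_def by simp
  moreover hence "zp_inv p u 1 \<noteq> 0" by auto
  ultimately show ?thesis using pr unfolding zp_unit_def by simp
qed

lemma r1_nz:
  assumes "CHAR('k::field) = p" "zp_unit p u"
  shows "(of_int (u 1) :: 'k) \<noteq> 0"
proof -
  have "0 \<le> u 1" "u 1 < int p" "u 1 \<noteq> 0"
    using assms(2) Zp_range1 unfolding zp_unit_def by auto
  hence "\<not> int p dvd u 1" by (auto dest: zdvd_imp_le)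
  thus ?thesis using of_int_eq_0_iff_char_dvd[where 'a='k] assms(1) by simp
qed

lemma r1_inv:
  assumes "prime p" "CHAR('k::field) = p" "zp_unit p u"
  shows "(of_int (zp_inv p u 1) :: 'k) = inverse (of_int (u 1))"
proof -
  have "(of_int ((u 1 * zp_inv p u 1) mod int p) :: 'k) = 1" using zp_inv_unit[OF assms(1,3)] by simp
  hence "(of_int (u 1) :: 'k) * of_int (zp_inv p u 1) = 1" unfolding of_int_mod_char[OF assms(2)] by simp
  thus ?thesis using r1_nz[OF assms(2,3)] by (simp add: field_simps)
qed

lemma r1_mult:
  assumes "prime p" "CHAR('k::field) = p" "zp_unit p u" "zp_unit p t"
  shows "(of_int (zp_mult p u t 1) :: 'k) = of_int (u 1) * of_int (t 1)"
  using zp_unit_mult[OF assms(1,3,4)] of_int_mod_char[OF assms(2)] by simp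

lemma qp_of_zp_unit:
  assumes "x 1 \<noteq> 0"
  shows "qp_of_zp p x = Some (0, x)"
proof -
  have "x \<noteq> zp_zero" using assms unfolding zp_zero_def by auto
  moreover have "(LEAST n. x (Suc n) \<noteq> 0) = 0" using assms by (intro Least_eq_0) simp
  ultimately show ?thesis unfolding qp_of_zp_def by simp
qed

lemma qp_of_zp_cases:
  "qp_of_zp p x = None \<or> (\<exists>m t. qp_of_zp p x = Some (int m, t))"
  unfolding qp_of_zp_def by (auto simp: Let_def)

theorem mainTheorem7:
  fixes p r :: nat and s :: int and lam :: "'k::field" and a b d :: qp
  assumes "prime p" and "CHAR('k) = p" and "finite (UNIV :: 'k set)"
    and "r < p" and "lam \<noteq> 0"
    and "(a, b, d) \<in> BKZ p"
  shows "\<forall>y \<in> plim p r lam.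
           theta (act_B p r s lam (B_inv p (a, b, d)) y)
             = chi p s lam (qp_mult p a d) * omega p a ^ r * theta y"
proof
  fix y assume y: "y \<in> plim p r lam"
  obtain z k11 k12 k21 k22 where
    aU: "a \<in> qp_units p" and dU: "d \<in> qp_units p" and zU: "z \<in> qp_units p"
    and G: "(k11, k12, k21, k22) \<in> GL2Zp p"
    and ea: "a = qp_mult p z (qp_of_zp p k11)" and eb: "b = qp_mult p z (qp_of_zp p k12)"
    and e21: "None = qp_mult p z (qp_of_zp p k21)" and ed: "d = qp_mult p z (qp_of_zp p k22)"
    using assms(6) unfolding BKZ_def Bor_def by blast
  obtain vz uz where z: "z = Some (vz, uz)" using zU unfolding qp_units_def by auto
  have "qp_of_zp p k21 = None" using e21 unfolding z qp_mult_def by (auto split: option.splits)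
  hence k21: "k21 = zp_zero" unfolding qp_of_zp_def by (auto split: if_splits simp: Let_def)
  have "zp_unit p (zp_sub p (zp_mult p k11 k22) (zp_mult p k12 k21))" using G unfolding GL2Zp_def by blast
  hence "((k11 1 * k22 1) mod int p) mod int p \<noteq> 0"
    unfolding zp_unit_def zp_sub_def zp_mult_def k21 zp_zero_def by simp
  hence k1: "k11 1 \<noteq> 0" "k22 1 \<noteq> 0" by auto
  define au where "au = zp_mult p uz k11"
  define du where "du = zp_mult p uz k22"
  have a: "a = Some (vz, au)" unfolding ea z qp_of_zp_unit[where x=k11 and p=p, OF k1(1)] au_def qp_mult_def by simp
  have d: "d = Some (vz, du)" unfolding ed z qp_of_zp_unit[where x=k22 and p=p, OF k1(2)] du_def qp_mult_def by simp
  have auU: "zp_unit p au" using aU unfolding a qp_units_def qp_wf_def by simp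
  have duU: "zp_unit p du" using dU unfolding d qp_units_def qp_wf_def by simp
  have b: "b = None \<or> (\<exists>m t. b = Some (vz + int m, t))"
    using qp_of_zp_cases[of p k12] unfolding eb z qp_mult_def by auto
  define u where "u = zp_mult p (zp_inv p du) (zp_inv p (zp_inv p au))"
  define b' where "b' = qp_neg p (qp_mult p b (qp_mult p (qp_inv p a) (qp_inv p d)))"
  have Binv: "B_inv p (a, b, d) = (qp_inv p a, b', qp_inv p d)"
    unfolding B_inv_def b'_def by simp
  have hdu: "qp_mult p (qp_inv p d) (qp_inv p (qp_inv p a)) = Some (0, u)"
    unfolding a d u_def qp_inv_def qp_mult_def by simp
  have hbz: "qp_mult p b' (qp_inv p (qp_inv p d)) = None \<or>
     (\<exists>w t. qp_mult p b' (qp_inv p (qp_inv p d)) = Some (w, t) \<and> w \<ge> 0)"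
    using b
  proof
    assume "b = None" thus ?thesis unfolding b'_def qp_mult_def qp_neg_def by simp
  next
    assume "\<exists>m t. b = Some (vz + int m, t)"
    then obtain m t where "b = Some (vz + int m, t)" by blast
    thus ?thesis unfolding b'_def a d qp_mult_def qp_neg_def qp_inv_def by simp
  qed
  note mc = main_comp[OF y hdu hbz, of s]
  let ?A = "of_int (au 1) :: 'k"
  let ?D = "of_int (du 1) :: 'k"
  have iaU: "zp_unit p (zp_inv p au)" and idU: "zp_unit p (zp_inv p du)"
    using zp_inv_unit[OF assms(1)] auU duU by blast+
  have iiaU: "zp_unit p (zp_inv p (zp_inv p au))" using zp_inv_unit[OF assms(1) iaU] by blast
  have uU: "zp_unit p u" unfolding u_def using zp_unit_mult[OF assms(1) idU iiaU] by blast
  have o1: "omega p (qp_inv p a) = inverse ?A"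
    unfolding omega_def a qp_inv_def using r1_inv[OF assms(1,2) auU] by simp
  have c1: "chi p s lam (qp_inv p a) = inverse ?A powi s * lam powi (- vz)"
    unfolding chi_def using o1 unfolding a qp_inv_def by simp
  have u1: "(of_int (zp_inv p u 1) :: 'k) = inverse (inverse ?D * ?A)"
  proof -
    have "(of_int (zp_inv p u 1) :: 'k) = inverse (of_int (u 1))"
      by (rule r1_inv[OF assms(1,2) uU])
    also have "(of_int (u 1) :: 'k) = of_int (zp_inv p du 1) * of_int (zp_inv p (zp_inv p au) 1)"
      unfolding u_def by (rule r1_mult[OF assms(1,2) idU iiaU])
    also have "(of_int (zp_inv p du 1) :: 'k) = inverse ?D" by (rule r1_inv[OF assms(1,2) duU])
    also have "(of_int (zp_inv p (zp_inv p au) 1) :: 'k) = inverse (of_int (zp_inv p au 1))"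
      by (rule r1_inv[OF assms(1,2) iaU])
    also have "(of_int (zp_inv p au 1) :: 'k) = inverse ?A" by (rule r1_inv[OF assms(1,2) auU])
    finally show ?thesis by simp
  qed
  have c2: "chi p s lam (qp_mult p a d) = (?A * ?D) powi s * lam powi (vz + vz)"
    unfolding chi_def omega_def a d qp_mult_def using r1_mult[OF assms(1,2) auU duU] by simp
  have o2: "omega p a = ?A" unfolding omega_def a by simp
  show "theta (act_B p r s lam (B_inv p (a, b, d)) y)
             = chi p s lam (qp_mult p a d) * omega p a ^ r * theta y"
    unfolding Binv mc o1 c1 u1 c2 o2
    using fid[OF r1_nz[OF assms(2) auU] r1_nz[OF assms(2) duU] assms(5), of r s vz]
    by simp
qed

end
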